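(* Let $P_{00},P_{01},P_{10},P_{11}$ be strictly positive random variables on a probability space, and set $P_0=P_{00}+P_{01}$, $P_1=P_{10}+P_{11}$, $$\Lambda_1=\ln\frac{P_0}{P_1},\qquad \Lambda_2=\ln\frac{P_{00}}{P_{01}},\qquad \alpha=\frac{\min\{P_{10},P_{11}\}}{P_1}.$$ Let $\mathcal C$ be the event that $P_{00}$ is at least the second largest element of the multiset $\{P_{00},P_{01},P_{10},P_{11}\}$. Then $$\Pr(\mathcal C)\ \le\ \Pr(\Lambda_1\ge 0,\ \Lambda_2\ge 0)\ +\ \Pr\!\big(\Lambda_1\ge 0,\ -\ln(2e^{\Lambda_1}-1)\le \Lambda_2<0\big)\ +\ \Pr(\ln\alpha\le \Lambda_1<0).$$
   Context: This is the list-size-$L=2$ case of the analysis of SCL decoding of polar codes. There, for an information-bit index $k$, $P_{v_{k-1}v_k}=P(v_{k-1}\mid \mathbf y,\mathbf 0_1^{k-2})\,P(v_k\mid \mathbf y,\mathbf 0_1^{k-2},v_{k-1})$ is the posterior path metric of the extension $(v_{k-1},v_k)$ of the all-zero prefix, $\Lambda_1=\mathsf L_{k-1}$ and $\Lambda_2=\mathsf L_k$ are the log-likelihood ratios of information bits $k-1$ and $k$ given that all previous information bits are $0$, and $\mathcal C=\mathcal C_k$ is the event that the correct all-zero path survives in the list of size $2$ at step $k$ given that the list at step $k-1$ consists of the two extensions of the all-zero prefix. Note $2e^{\Lambda_1}-1\ge 1$ on $\{\Lambda_1\ge0\}$, so the logarithm is well defined there. *)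

theory Defs
  imports "HOL-Probability.Probability"
begin

definition second_largest4 :: "real \<Rightarrow> real \<Rightarrow> real \<Rightarrow> real \<Rightarrow> real" where
  "second_largest4 a b c d = rev (sorted_list_of_multiset {#a, b, c, d#}) ! 1"

end

theory Submission
  imports Defs
begin

lemma sl: "second_largest4 a b c d = (sort [a,b,c,d]) ! 2"
proof -
  have "{#a,b,c,d#} = mset [a,b,c,d]" by simp
  then show ?thesis unfolding second_largest4_def
    by (simp only: sorted_list_of_multiset_mset) (simp add: rev_nth)
qed

lemma key: fixes a b c d :: real assumes "a \<ge> second_largest4 a b c d"
  shows "\<not>(b>a\<and>c>a) \<and> \<not>(b>a\<and>d>a) \<and> \<not>(c>a\<and>d>a)"
  using assms unfolding sl by (auto split: if_splits)

lemma pointwise: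
  fixes a b c d :: real
  assumes pos: "a>0" "b>0" "c>0" "d>0" and C: "a \<ge> second_largest4 a b c d"
  shows "(ln ((a+b)/(c+d)) \<ge> 0 \<and> ln (a/b) \<ge> 0)
    \<or> (ln ((a+b)/(c+d)) \<ge> 0 \<and> - ln (2 * exp (ln ((a+b)/(c+d))) - 1) \<le> ln (a/b) \<and> ln (a/b) < 0)
    \<or> (ln (min c d / (c+d)) \<le> ln ((a+b)/(c+d)) \<and> ln ((a+b)/(c+d)) < 0)"
proof -
  note k = key[OF C]
  have cd: "c+d>0" using pos by simp
  show ?thesis
  proof (cases "a+b \<ge> c+d")
    case True
    hence l1: "ln ((a+b)/(c+d)) \<ge> 0" using pos by (simp add: field_simps)
    show ?thesis
    proof (cases "a \<ge> b")
      case True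
      hence "ln (a/b) \<ge> 0" using pos by (simp add: field_simps)
      then show ?thesis using l1 by simp
    next
      case False
      hence ab: "a < b" by simp
      have l2: "ln (a/b) < 0" using pos ab by (simp add: field_simps)
      have "c \<le> a" "d \<le> a" using k ab by auto
      have ex: "exp (ln ((a+b)/(c+d))) = (a+b)/(c+d)" using pos by simp
      have q: "2 * ((a+b)/(c+d)) - 1 = (2*(a+b) - (c+d))/(c+d)" using cd by (simp add: field_simps)
      have qp: "2*(a+b) - (c+d) > 0" using True pos by (auto simp: algebra_simps)
      have ineq: "a*(2*(a+b)-(c+d)) \<ge> b*(c+d)"
      proof -
        have "(a+b)*(c+d) \<le> (a+b)*(2*a)" using \<open>c \<le> a\<close> \<open>d \<le> a\<close> pos
          by (intro mult_left_mono) auto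
        then show ?thesis by (simp add: algebra_simps)
      qed
      have "ln (a/b) + ln ((2*(a+b) - (c+d))/(c+d)) = ln ((a/b) * ((2*(a+b) - (c+d))/(c+d)))"
        using pos qp cd by (intro ln_mult_pos[symmetric]) auto
      also have "\<dots> \<ge> 0"
      proof -
        have e: "(a/b) * ((2*(a+b) - (c+d))/(c+d)) = (a*(2*(a+b)-(c+d)))/(b*(c+d))" by simp
        have "b*(c+d) > 0" using pos cd by simp
        hence "(a*(2*(a+b)-(c+d)))/(b*(c+d)) \<ge> 1" using ineq by (simp add: le_divide_eq)
        thus ?thesis unfolding e by simp
      qed
      finally have "- ln (2 * exp (ln ((a+b)/(c+d))) - 1) \<le> ln (a/b)"
        unfolding ex q by linarith
      then show ?thesis using l1 l2 by simp
    qed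
  next
    case False
    have l1: "ln ((a+b)/(c+d)) < 0" using pos False by (simp add: field_simps)
    have "min c d \<le> a" using k by auto
    hence "min c d / (c+d) \<le> (a+b)/(c+d)" using pos cd by (intro divide_right_mono) auto
    hence "ln (min c d / (c+d)) \<le> ln ((a+b)/(c+d))" using pos cd by simp
    then show ?thesis using l1 by simp
  qed
qed

theorem proposition2:
  fixes M :: "'a measure" and P00 P01 P10 P11 :: "'a \<Rightarrow> real"
  assumes "prob_space M"
    and "P00 \<in> borel_measurable M" and "P01 \<in> borel_measurable M"
    and "P10 \<in> borel_measurable M" and "P11 \<in> borel_measurable M"
    and "\<forall>x\<in>space M. P00 x > 0 \<and> P01 x > 0 \<and> P10 x > 0 \<and> P11 x > 0"
  defines "\<Lambda>1 \<equiv> \<lambda>x. ln ((P00 x + P01 x) / (P10 x + P11 x))"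
    and "\<Lambda>2 \<equiv> \<lambda>x. ln (P00 x / P01 x)"
    and "\<alpha> \<equiv> \<lambda>x. min (P10 x) (P11 x) / (P10 x + P11 x)"
    and "C \<equiv> {x \<in> space M. P00 x \<ge> second_largest4 (P00 x) (P01 x) (P10 x) (P11 x)}"
  shows "measure M C
      \<le> measure M {x \<in> space M. \<Lambda>1 x \<ge> 0 \<and> \<Lambda>2 x \<ge> 0}
       + measure M {x \<in> space M. \<Lambda>1 x \<ge> 0 \<and> - ln (2 * exp (\<Lambda>1 x) - 1) \<le> \<Lambda>2 x \<and> \<Lambda>2 x < 0}
       + measure M {x \<in> space M. ln (\<alpha> x) \<le> \<Lambda>1 x \<and> \<Lambda>1 x < 0}"
proof -
  interpret prob_space M by fact
  define A where "A = {x \<in> space M. \<Lambda>1 x \<ge> 0 \<and> \<Lambda>2 x \<ge> 0}"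
  define B where "B = {x \<in> space M. \<Lambda>1 x \<ge> 0 \<and> - ln (2 * exp (\<Lambda>1 x) - 1) \<le> \<Lambda>2 x \<and> \<Lambda>2 x < 0}"
  define D where "D = {x \<in> space M. ln (\<alpha> x) \<le> \<Lambda>1 x \<and> \<Lambda>1 x < 0}"
  have mL1[measurable]: "\<Lambda>1 \<in> borel_measurable M" unfolding \<Lambda>1_def using assms(2-5) by measurable
  have mL2[measurable]: "\<Lambda>2 \<in> borel_measurable M" unfolding \<Lambda>2_def using assms(2-5) by measurable
  have ma[measurable]: "\<alpha> \<in> borel_measurable M" unfolding \<alpha>_def using assms(2-5) by measurable
  have sA: "A \<in> sets M" unfolding A_def by measurable
  have sB: "B \<in> sets M" unfolding B_def by measurable
  have sD: "D \<in> sets M" unfolding D_def by measurable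
  have sub: "C \<subseteq> A \<union> B \<union> D"
  proof
    fix x assume "x \<in> C"
    hence x: "x \<in> space M" and c: "P00 x \<ge> second_largest4 (P00 x) (P01 x) (P10 x) (P11 x)"
      unfolding C_def by auto
    have p: "P00 x > 0" "P01 x > 0" "P10 x > 0" "P11 x > 0" using assms(6) x by auto
    show "x \<in> A \<union> B \<union> D"
      using pointwise[OF p c] x unfolding A_def B_def D_def \<Lambda>1_def \<Lambda>2_def \<alpha>_def by blast
  qed
  have "measure M C \<le> measure M (A \<union> B \<union> D)"
    using sub sA sB sD by (intro finite_measure_mono) auto
  also have "\<dots> \<le> measure M (A \<union> B) + measure M D"
    using sA sB sD by (intro measure_subadditive) auto
  also have "\<dots> \<le> measure M A + measure M B + measure M D"
    using sA sB by (simp add: measure_subadditive)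
  finally show ?thesis unfolding A_def B_def D_def .
qed

end
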